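(* Let $R$ be a tolerance relation on $\{1,\ldots,n\}$ and assume that in each connected component of the graph of $R$ there is a dominant vertex. Then for every $a\in A(R)$ one has $a\succeq 0$ if and only if there exist finitely many $b_1,\ldots,b_k\in A(R)$ with $a=\sum_{i=1}^k b_i\star b_i^*$.
   Context: A tolerance relation on a set $X$ is a reflexive and symmetric relation $R\subset X\times X$; its graph is the undirected graph with vertex set $X$ and an edge between $i\neq j$ whenever $(i,j)\in R$. A dominant vertex of a graph is a vertex adjacent to all other vertices (here: of its connected component). Let $T:M_n(\mathbb{C})\to M_n(\mathbb{C})$, $T(b)=\sum_{(i,j)\in R}E_{ii}bE_{jj}$ (i.e. $T$ sets to zero the entries in positions $(i,j)\notin R$), where $E_{ij}$ are matrix units. $A(R)=T(M_n(\mathbb{C}))$, with product $a\star b:=T(ab)$ and involution the conjugate transpose. For $a\in A(R)$, write $a\succeq 0$ if there exists a positive semidefinite $b\in M_n(\mathbb{C})$ with $a=T(b)$. *)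

theory Defs
  imports "HOL-Analysis.Analysis"
begin

text \<open>n x n complex matrices are modelled as complex^'n^'n for a finite index type 'n
  (so n = CARD('n)); a relation on the index set is a set of pairs.\<close>

definition tolerance :: "('n \<times> 'n) set \<Rightarrow> bool" where
  "tolerance R \<longleftrightarrow> refl R \<and> sym R"

text \<open>Graph of R: edge between i \<noteq> j iff (i,j) \<in> R. Two vertices lie in the same
  connected component iff they are related by the reflexive transitive closure of R.\<close>

definition dominant_vertex :: "('n \<times> 'n) set \<Rightarrow> 'n \<Rightarrow> bool" where
  "dominant_vertex R d \<longleftrightarrow> (\<forall>j. (d, j) \<in> R\<^sup>* \<and> j \<noteq> d \<longrightarrow> (d, j) \<in> R)"

definition each_component_has_dominant :: "('n \<times> 'n) set \<Rightarrow> bool" where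
  "each_component_has_dominant R \<longleftrightarrow>
     (\<forall>i. \<exists>d. (i, d) \<in> R\<^sup>* \<and> dominant_vertex R d)"

definition Tmap :: "('n \<times> 'n) set \<Rightarrow> complex^'n^'n \<Rightarrow> complex^'n^'n" where
  "Tmap R b = (\<chi> i j. if (i, j) \<in> R then b $ i $ j else 0)"

definition AR :: "('n::finite \<times> 'n) set \<Rightarrow> (complex^'n^'n) set" where
  "AR R = range (Tmap R)"

definition star_prod :: "('n::finite \<times> 'n) set \<Rightarrow> complex^'n^'n \<Rightarrow> complex^'n^'n \<Rightarrow> complex^'n^'n" where
  "star_prod R a b = Tmap R (a ** b)"

definition adjoint_mat :: "complex^'n^'n \<Rightarrow> complex^'n^'n" where
  "adjoint_mat b = (\<chi> i j. cnj (b $ j $ i))"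

definition psd :: "complex^'n::finite^'n \<Rightarrow> bool" where
  "psd b \<longleftrightarrow> adjoint_mat b = b \<and>
     (\<forall>x :: complex^'n. 0 \<le> Re (\<Sum>i\<in>UNIV. \<Sum>j\<in>UNIV. cnj (x $ i) * b $ i $ j * x $ j))"

definition succeq0 :: "('n::finite \<times> 'n) set \<Rightarrow> complex^'n^'n \<Rightarrow> bool" where
  "succeq0 R a \<longleftrightarrow> (\<exists>b. psd b \<and> a = Tmap R b)"

end

theory Submission
  imports Defs
begin


definition r1 :: "complex^'n \<Rightarrow> complex^'n^'n" where
  "r1 v = (\<chi> i j. v$i * cnj (v$j))"

definition qf :: "complex^'n::finite^'n \<Rightarrow> complex^'n \<Rightarrow> complex" where
  "qf b x = (\<Sum>i\<in>UNIV. \<Sum>j\<in>UNIV. cnj (x $ i) * b $ i $ j * x $ j)"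

lemma psd_alt: "psd b \<longleftrightarrow> adjoint_mat b = b \<and> (\<forall>x. 0 \<le> Re (qf b x))"
  by (simp add: psd_def qf_def)

lemma qf_add: "qf (b + c) x = qf b x + qf c x"
  by (simp add: qf_def algebra_simps sum.distrib)

lemma qf_diff: "qf (b - c) x = qf b x - qf c x"
  by (simp add: qf_def algebra_simps sum_subtractf)

lemma qf_r1: "qf (r1 v) x = (\<Sum>i\<in>UNIV. cnj (x$i) * v$i) * cnj (\<Sum>i\<in>UNIV. cnj (x$i) * v$i)"
  by (simp add: qf_def r1_def sum_product mult_ac)

lemma Re_mult_cnj_ge: "0 \<le> Re (z * cnj z)"
  by (simp add: complex_mult_cnj)

lemma adj_add: "adjoint_mat (a + b) = adjoint_mat a + adjoint_mat b"
  by (simp add: adjoint_mat_def vec_eq_iff)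

lemma adj_diff: "adjoint_mat (a - b) = adjoint_mat a - adjoint_mat b"
  by (simp add: adjoint_mat_def vec_eq_iff)

lemma adj_r1: "adjoint_mat (r1 v) = r1 v"
  by (simp add: adjoint_mat_def r1_def vec_eq_iff mult.commute)

lemma psd_r1: "psd (r1 v)"
  unfolding psd_alt qf_r1 adj_r1 using Re_mult_cnj_ge by blast

lemma psd_0: "psd 0"
  by (simp add: psd_def adjoint_mat_def vec_eq_iff)

lemma psd_add: "psd a \<Longrightarrow> psd b \<Longrightarrow> psd (a + b)"
  unfolding psd_alt by (simp add: adj_add qf_add)

lemma psd_sum: "psd (\<Sum>l<(k::nat). r1 (vs l))"
  by (induction k) (simp_all add: psd_0 psd_add psd_r1)

lemma cc_r1: "c ** adjoint_mat c = (\<Sum>l\<in>UNIV. r1 (\<chi> i. c$i$l))"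
  by (simp add: vec_eq_iff matrix_matrix_mult_def adjoint_mat_def r1_def)

lemma Tmap_add: "Tmap R (a + b) = Tmap R a + Tmap R b"
  by (simp add: Tmap_def vec_eq_iff)

lemma Tmap_0: "Tmap R 0 = 0"
  by (simp add: Tmap_def vec_eq_iff)

lemma Tmap_sum: "Tmap R (\<Sum>i<(k::nat). f i) = (\<Sum>i<k. Tmap R (f i))"
  by (induction k) (simp_all add: Tmap_0 Tmap_add)

lemma sum_mult_delta: "(\<Sum>j\<in>(UNIV::'n::finite set). f j * (if j = p then t else 0)) = (f p * (t::complex))"
proof -
  have "(\<Sum>j\<in>UNIV. f j * (if j = p then t else 0)) = (\<Sum>j\<in>UNIV. if j = p then f j * t else 0)"
    by (intro sum.cong) auto
  also have "\<dots> = f p * t" using sum.delta[of UNIV p "\<lambda>j. f j * t"] by simp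
  finally show ?thesis .
qed

lemma qf_shift:
  "qf b (\<chi> i. x$i + (if i = p then t else 0)) = qf b x + (\<Sum>i\<in>UNIV. cnj (x$i) * b$i$p) * t
     + cnj t * (\<Sum>j\<in>UNIV. b$p$j * x$j) + cnj t * b$p$p * t"
proof -
  have "qf b (\<chi> i. x$i + (if i = p then t else 0)) =
    (\<Sum>i\<in>UNIV. \<Sum>j\<in>UNIV. cnj (x $ i) * b $ i $ j * x $ j + cnj (x $ i) * b $ i $ j * (if j = p then t else 0)
       + (if i = p then cnj t else 0) * b $ i $ j * x $ j + (if i = p then cnj t else 0) * b $ i $ j * (if j = p then t else 0))"
    unfolding qf_def by (intro sum.cong refl) (auto simp: algebra_simps)
  also have "\<dots> = qf b x + (\<Sum>i\<in>UNIV. \<Sum>j\<in>UNIV. cnj (x $ i) * b $ i $ j * (if j = p then t else 0))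
     + (\<Sum>i\<in>UNIV. \<Sum>j\<in>UNIV. (if i = p then cnj t else 0) * b $ i $ j * x $ j)
     + (\<Sum>i\<in>UNIV. \<Sum>j\<in>UNIV. (if i = p then cnj t else 0) * b $ i $ j * (if j = p then t else 0))"
    by (simp only: sum.distrib qf_def)
  also have "(\<Sum>i\<in>UNIV. \<Sum>j\<in>UNIV. cnj (x $ i) * b $ i $ j * (if j = p then t else 0))
      = (\<Sum>i\<in>UNIV. cnj (x$i) * b$i$p) * t"
    by (simp add: sum_distrib_right if_distrib cong: if_cong)
  also have "(\<Sum>i\<in>UNIV. \<Sum>j\<in>UNIV. (if i = p then cnj t else 0) * b $ i $ j * x $ j)
      = cnj t * (\<Sum>j\<in>UNIV. b$p$j * x$j)"
  proof -
    have "\<And>i. (\<Sum>j\<in>UNIV. (if i = p then cnj t else 0) * b $ i $ j * x $ j) =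
       (if i = p then cnj t * (\<Sum>j\<in>UNIV. b$p$j * x$j) else 0)"
      by (simp add: sum_distrib_left mult_ac)
    then show ?thesis by simp
  qed
  also have "(\<Sum>i\<in>UNIV. \<Sum>j\<in>UNIV. (if i = p then cnj t else 0) * b $ i $ j * (if j = p then t else 0))
      = cnj t * b$p$p * t"
  proof -
    have "\<And>i. (\<Sum>j\<in>UNIV. (if i = p then cnj t else 0) * b $ i $ j * (if j = p then t else 0)) =
       (if i = p then cnj t * b$p$p * t else 0)"
      by (simp add: sum_mult_delta)
    then show ?thesis by simp
  qed
  finally show ?thesis .
qed

lemma Re_ofr_mult: "Re (of_real r * z) = r * Re z"
  by simp

lemma herm: "adjoint_mat b = b \<Longrightarrow> b$i$j = cnj (b$j$i)"
proof -
  assume h: "adjoint_mat b = b"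
  have "b$i$j = adjoint_mat b $ i $ j" by (simp only: h)
  also have "\<dots> = cnj (b$j$i)" by (simp add: adjoint_mat_def)
  finally show ?thesis .
qed

lemma psd_shift:
  assumes "psd b"
  shows "0 \<le> Re (qf b x) + 2 * Re (cnj t * (\<Sum>j\<in>UNIV. b$p$j * x$j)) + (cmod t)^2 * Re (b$p$p)"
proof -
  define w where "w = (\<Sum>j\<in>UNIV. b$p$j * x$j)"
  have h: "adjoint_mat b = b" and q: "\<And>y. 0 \<le> Re (qf b y)" using assms unfolding psd_alt by blast+
  have 1: "(\<Sum>i\<in>UNIV. cnj (x$i) * b$i$p) = cnj w"
  proof -
    have *: "\<And>i. cnj (x$i) * b$i$p = cnj (b$p$i * x$i)"
    proof -
      fix i have "b$i$p = cnj (b$p$i)" by (rule herm[OF h])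
      then show "cnj (x$i) * b$i$p = cnj (b$p$i * x$i)" by (simp add: mult.commute)
    qed
    show ?thesis unfolding w_def cnj_sum by (rule sum.cong[OF refl], rule *)
  qed
  have 2: "Re (cnj w * t) = Re (cnj t * w)"
  proof -
    have "cnj w * t = cnj (cnj t * w)" by (simp add: mult.commute)
    then show ?thesis by (simp only: cnj.sel)
  qed
  have 3: "Re (cnj t * b$p$p * t) = (cmod t)^2 * Re (b$p$p)"
  proof -
    have tt: "cnj t * t = of_real ((cmod t)^2)" by (subst mult.commute) (rule complex_norm_square[symmetric])
    have "cnj t * b$p$p * t = of_real ((cmod t)^2) * b$p$p"
      by (subst tt[symmetric]) (simp add: mult_ac)
    then show ?thesis by (simp only: Re_ofr_mult)
  qed
  have "0 \<le> Re (qf b (\<chi> i. x$i + (if i = p then t else 0)))" by (rule q)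
  also have "\<dots> = Re (qf b x) + Re (cnj w * t) + Re (cnj t * w) + Re (cnj t * b$p$p * t)"
    unfolding qf_shift 1 w_def[symmetric] by (simp only: plus_complex.sel)
  finally have "0 \<le> Re (qf b x) + Re (cnj w * t) + Re (cnj t * w) + Re (cnj t * b$p$p * t)" .
  then show ?thesis unfolding w_def[symmetric] using 2 3 by linarith
qed

lemma diag_real: "psd b \<Longrightarrow> b$p$p = of_real (Re (b$p$p))"
proof -
  assume "psd b"
  then have "b$p$p = cnj (b$p$p)" using herm[of b p p] by (simp add: psd_alt del: complex_cnj_cancel_iff)
  then have "Im (b$p$p) = Im (cnj (b$p$p))" by (rule arg_cong)
  then have "Im (b$p$p) = 0" by simp
  then show ?thesis by (simp add: complex_eq_iff)
qed

lemma diag_nonneg: "psd b \<Longrightarrow> 0 \<le> Re (b$p$p)"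
  using psd_shift[of b 0 1 p] by (simp add: qf_def)



lemma cnj_mult_self: "cnj z * z = of_real ((cmod z)^2)"
  by (subst mult.commute) (rule complex_norm_square[symmetric])

lemma row_zero:
  assumes "psd b" "Re (b$p$p) = 0"
  shows "b$p$j = 0"
proof (rule ccontr)
  assume ne: "b$p$j \<noteq> 0"
  define x where "x = (\<chi> i. if i = j then (1::complex) else 0)"
  have w: "(\<Sum>l\<in>UNIV. b$p$l * x$l) = b$p$j"
    unfolding x_def using sum_mult_delta[of "\<lambda>l. b$p$l" j 1] by simp
  define Q where "Q = Re (qf b x)"
  define c where "c = (cmod (b$p$j))^2"
  have c: "c > 0" using ne by (simp add: c_def)
  define s where "s = (Q + 1) / (2 * c)"
  have "0 \<le> Q + 2 * Re (cnj (- (of_real s * b$p$j)) * b$p$j)"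
    using psd_shift[OF assms(1), of x "- (of_real s * b$p$j)" p] assms(2) w by (simp add: Q_def)
  also have "Re (cnj (- (of_real s * b$p$j)) * b$p$j) = - s * c"
  proof -
    have "cnj (- (of_real s * b$p$j)) * b$p$j = - (of_real s * (b$p$j * cnj (b$p$j)))" by simp
    also have "\<dots> = - of_real (s * c)" unfolding c_def complex_norm_square[symmetric] by simp
    finally have "cnj (- (of_real s * b$p$j)) * b$p$j = - of_real (s * c)" .
    then show ?thesis by (simp only: Re_complex_of_real uminus_complex.sel mult_minus_left)
  qed
  finally have "0 \<le> Q - 2 * s * c" by simp
  moreover have "2 * s * c = Q + 1" unfolding s_def using c by (simp add: field_simps)
  ultimately show False by simp
qed

lemma schur:
  assumes "psd b" "Re (b$p$p) > 0"
  defines "v \<equiv> (\<chi> i. b$i$p / of_real (sqrt (Re (b$p$p))))"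
  shows "psd (b - r1 v)" and "\<And>i j. (b - r1 v)$i$j = b$i$j - b$i$p * b$p$j / of_real (Re (b$p$p))"
proof -
  define r where "r = Re (b$p$p)"
  have r: "r > 0" using assms by (simp add: r_def)
  have h: "adjoint_mat b = b" using assms(1) by (simp add: psd_alt)
  have sq: "of_real (sqrt r) * of_real (sqrt r) = (of_real r :: complex)"
  proof -
    have "sqrt r * sqrt r = r" using r by simp
    then show ?thesis by (simp only: of_real_mult[symmetric])
  qed
  show "\<And>i j. (b - r1 v)$i$j = b$i$j - b$i$p * b$p$j / of_real (Re (b$p$p))"
  proof -
    fix i j
    have "r1 v $ i $ j = b$i$p * cnj (b$j$p) / (of_real (sqrt r) * of_real (sqrt r))"
      by (simp add: r1_def v_def r_def)
    also have "\<dots> = b$i$p * b$p$j / of_real r" using herm[OF h, of p j] sq by simp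
    finally show "(b - r1 v)$i$j = b$i$j - b$i$p * b$p$j / of_real (Re (b$p$p))" by (simp add: r_def)
  qed
  show "psd (b - r1 v)"
    unfolding psd_alt
  proof (intro conjI allI)
    show "adjoint_mat (b - r1 v) = b - r1 v" by (simp add: adj_diff adj_r1 h)
    fix x
    define w where "w = (\<Sum>j\<in>UNIV. b$p$j * x$j)"
    define z where "z = (\<Sum>i\<in>UNIV. cnj (x$i) * v$i)"
    have z: "z = cnj w / of_real (sqrt r)"
    proof -
      have "\<And>i. cnj (x$i) * v$i = cnj (b$p$i * x$i) / of_real (sqrt r)"
      proof -
        fix i have e: "b$i$p = cnj (b$p$i)" by (rule herm[OF h])
        show "cnj (x$i) * v$i = cnj (b$p$i * x$i) / of_real (sqrt r)"
          unfolding v_def r_def by (simp add: e mult.commute)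
      qed
      then show ?thesis unfolding z_def w_def by (simp add: sum_divide_distrib)
    qed
    have "Re (qf (r1 v) x) = (cmod z)^2"
      unfolding qf_r1 z_def[symmetric] complex_norm_square[symmetric] by simp
    also have "\<dots> = (cmod w)^2 / r" using r unfolding z by (simp add: norm_divide power_divide)
    finally have e1: "Re (qf (r1 v) x) = (cmod w)^2 / r" .
    define t where "t = - (w / of_real r)"
    have e2: "Re (cnj t * w) = - ((cmod w)^2 / r)"
    proof -
      have "cnj t * w = - (cnj w * w / of_real r)"
        unfolding t_def by simp
      also have "\<dots> = - of_real ((cmod w)^2 / r)" by (simp only: cnj_mult_self of_real_divide)
      finally show ?thesis by (simp only: Re_complex_of_real uminus_complex.sel)
    qed
    have e3: "(cmod t)^2 * r = (cmod w)^2 / r"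
      unfolding t_def using r by (simp add: norm_divide power_divide power2_eq_square)
    have "0 \<le> Re (qf b x) + 2 * Re (cnj t * w) + (cmod t)^2 * r"
      using psd_shift[OF assms(1), of x t p] unfolding w_def r_def by simp
    then have "0 \<le> Re (qf b x) - (cmod w)^2 / r" using e2 e3 by simp
    then show "0 \<le> Re (qf (b - r1 v) x)" using e1 by (simp add: qf_diff)
  qed
qed



lemma psd_sum_gen: "finite A \<Longrightarrow> (\<And>x. x \<in> A \<Longrightarrow> psd (f x)) \<Longrightarrow> psd (sum f A)"
  by (induction A rule: finite_induct) (simp_all add: psd_0 psd_add)

lemma psd_cc: "psd (c ** adjoint_mat c)"
  unfolding cc_r1 by (rule psd_sum_gen) (simp_all add: psd_r1)

lemma chol_aux:
  assumes "finite S"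
  shows "\<forall>b::complex^'n::finite^'n. psd b \<and> (\<forall>i j. b$i$j \<noteq> 0 \<longrightarrow> i \<in> S) \<longrightarrow> (\<exists>k vs. b = (\<Sum>l<(k::nat). r1 (vs l)))"
  using assms
proof (induction S rule: finite_induct)
  case empty
  show ?case
  proof (intro allI impI)
    fix b :: "complex^'n^'n" assume "psd b \<and> (\<forall>i j. b$i$j \<noteq> 0 \<longrightarrow> i \<in> {})"
    then have "b = 0" by (simp add: vec_eq_iff)
    then show "\<exists>k vs. b = (\<Sum>l<(k::nat). r1 (vs l))" by (intro exI[of _ 0]) simp
  qed
next
  case (insert p S)
  show ?case
  proof (intro allI impI)
    fix b :: "complex^'n^'n" assume a: "psd b \<and> (\<forall>i j. b$i$j \<noteq> 0 \<longrightarrow> i \<in> insert p S)"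
    then have pb: "psd b" and sup: "\<And>i j. b$i$j \<noteq> 0 \<Longrightarrow> i \<in> insert p S" by auto
    show "\<exists>k vs. b = (\<Sum>l<(k::nat). r1 (vs l))"
    proof (cases "Re (b$p$p) = 0")
      case True
      have "\<forall>i j. b$i$j \<noteq> 0 \<longrightarrow> i \<in> S" using sup row_zero[OF pb True] by blast
      then show ?thesis using insert.IH pb by blast
    next
      case False
      then have rpos: "Re (b$p$p) > 0" using diag_nonneg[OF pb, of p] by linarith
      define r where "r = Re (b$p$p)"
      have bpp: "b$p$p = of_real r" unfolding r_def by (rule diag_real[OF pb])
      have r0: "r \<noteq> 0" using rpos r_def by simp
      define v where "v = (\<chi> i. b$i$p / of_real (sqrt (Re (b$p$p))))"
      have ps: "psd (b - r1 v)" and ent: "\<And>i j. (b - r1 v)$i$j = b$i$j - b$i$p * b$p$j / of_real r"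
        using schur[OF pb rpos] unfolding v_def r_def by auto
      have "\<forall>i j. (b - r1 v)$i$j \<noteq> 0 \<longrightarrow> i \<in> S"
      proof (intro allI impI)
        fix i j assume ne: "(b - r1 v)$i$j \<noteq> 0"
        show "i \<in> S"
        proof (rule ccontr)
          assume nS: "i \<notin> S"
          show False
          proof (cases "i = p")
            case True
            have "(b - r1 v)$p$j = 0" unfolding ent bpp using r0 by simp
            then show False using ne True by simp
          next
            case False
            then have "i \<notin> insert p S" using nS by simp
            then have "b$i$j = 0" "b$i$p = 0" using sup by blast+
            then have "(b - r1 v)$i$j = 0" unfolding ent by simp
            then show False using ne by simp
          qed
        qed
      qed
      then obtain k vs where kv: "b - r1 v = (\<Sum>l<(k::nat). r1 (vs l))" using insert.IH ps by blast
      have "(\<Sum>l<k. r1 ((vs(k := v)) l)) = (\<Sum>l<k. r1 (vs l))" by (intro sum.cong) auto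
      moreover have "b = (b - r1 v) + r1 v" by simp
      ultimately have "b = (\<Sum>l<Suc k. r1 ((vs(k := v)) l))" unfolding kv by simp
      then show ?thesis by blast
    qed
  qed
qed

lemma chol: "psd (b::complex^'n::finite^'n) \<Longrightarrow> \<exists>k vs. b = (\<Sum>l<(k::nat). r1 (vs l))"
  using chol_aux[of "UNIV::'n set"] by auto

definition domv :: "('n \<times> 'n) set \<Rightarrow> 'n \<Rightarrow> 'n" where
  "domv R i = (SOME d. d \<in> R\<^sup>* `` {i} \<and> dominant_vertex R d)"

lemma domv_eq:
  assumes "sym R" "(i, j) \<in> R"
  shows "domv R i = domv R j"
proof -
  have ij: "(i, j) \<in> R\<^sup>*" "(j, i) \<in> R\<^sup>*" using assms by (auto dest: symD)
  have "R\<^sup>* `` {i} = R\<^sup>* `` {j}"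
    using ij by (auto intro: rtrancl_trans)
  then show ?thesis unfolding domv_def by simp
qed

lemma domv_R:
  assumes "tolerance R" "each_component_has_dominant R"
  shows "(i, domv R i) \<in> R"
proof -
  have ex: "\<exists>d. d \<in> R\<^sup>* `` {i} \<and> dominant_vertex R d"
    using assms(2) unfolding each_component_has_dominant_def by blast
  define d where "d = domv R i"
  have d: "d \<in> R\<^sup>* `` {i} \<and> dominant_vertex R d"
    unfolding d_def domv_def using someI_ex[OF ex] .
  have rf: "refl R" and sy: "sym R" using assms(1) unfolding tolerance_def by auto
  show ?thesis
  proof (cases "d = i")
    case True
    then show ?thesis using rf unfolding d_def by (auto simp: refl_on_def)
  next
    case False
    have "(i, d) \<in> R\<^sup>*" using d by blast
    then have "(d, i) \<in> R\<^sup>*" using sym_rtrancl[OF sy] by (auto dest: symD)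
    then have "(d, i) \<in> R" using d False unfolding dominant_vertex_def by auto
    then show ?thesis using sy unfolding d_def by (auto dest: symD)
  qed
qed

definition cmat :: "('n \<times> 'n) set \<Rightarrow> complex^'n \<Rightarrow> complex^'n^'n" where
  "cmat R v = (\<chi> i j. if j = domv R i then v$i else 0)"

lemma cmat_AR:
  assumes "tolerance R" "each_component_has_dominant R"
  shows "cmat R v \<in> AR R"
proof -
  have "Tmap R (cmat R v) = cmat R v"
    using domv_R[OF assms] by (auto simp: Tmap_def cmat_def vec_eq_iff)
  then show ?thesis unfolding AR_def by (metis rangeI)
qed

lemma cmat_prod:
  assumes "tolerance R"
  shows "star_prod R (cmat R v) (adjoint_mat (cmat R v)) = Tmap R (r1 v)"
proof -
  have sy: "sym R" using assms unfolding tolerance_def by auto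
  have "\<And>i j. (i, j) \<in> R \<Longrightarrow> (cmat R v ** adjoint_mat (cmat R v)) $ i $ j = r1 v $ i $ j"
  proof -
    fix i j assume ij: "(i, j) \<in> R"
    have e: "domv R j = domv R i" using domv_eq[OF sy ij] by simp
    have "(cmat R v ** adjoint_mat (cmat R v)) $ i $ j =
       (\<Sum>l\<in>UNIV. if l = domv R i then v$i * cnj (v$j) else 0)"
      unfolding matrix_matrix_mult_def adjoint_mat_def cmat_def
      by (simp only: vec_lambda_beta e) (intro sum.cong, auto)
    also have "\<dots> = v$i * cnj (v$j)" by simp
    finally show "(cmat R v ** adjoint_mat (cmat R v)) $ i $ j = r1 v $ i $ j"
      by (simp add: r1_def)
  qed
  then show ?thesis unfolding star_prod_def Tmap_def by (simp add: vec_eq_iff)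
qed

theorem proposition4p4:
  fixes R :: "('n::finite \<times> 'n) set" and a :: "complex^'n^'n"
  assumes "tolerance R"
    and "each_component_has_dominant R"
    and "a \<in> AR R"
  shows "succeq0 R a \<longleftrightarrow>
    (\<exists>k (b :: nat \<Rightarrow> complex^'n^'n). (\<forall>i<k. b i \<in> AR R) \<and>
        a = (\<Sum>i<k. star_prod R (b i) (adjoint_mat (b i))))"
proof
  assume "succeq0 R a"
  then obtain b where pb: "psd b" and ab: "a = Tmap R b" unfolding succeq0_def by blast
  obtain k vs where kv: "b = (\<Sum>l<(k::nat). r1 (vs l))" using chol[OF pb] by blast
  have "a = (\<Sum>l<k. star_prod R (cmat R (vs l)) (adjoint_mat (cmat R (vs l))))"
    unfolding ab kv Tmap_sum cmat_prod[OF assms(1)] ..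
  then show "\<exists>k (b :: nat \<Rightarrow> complex^'n^'n). (\<forall>i<k. b i \<in> AR R) \<and>
        a = (\<Sum>i<k. star_prod R (b i) (adjoint_mat (b i)))"
    apply -
    apply (rule exI[of _ k])
    apply (rule exI[of _ "\<lambda>l. cmat R (vs l)"])
    using cmat_AR[OF assms(1,2)] by simp
next
  assume "\<exists>k (b :: nat \<Rightarrow> complex^'n^'n). (\<forall>i<k. b i \<in> AR R) \<and>
        a = (\<Sum>i<k. star_prod R (b i) (adjoint_mat (b i)))"
  then obtain k and b :: "nat \<Rightarrow> complex^'n^'n" where
    ab: "a = (\<Sum>i<k. star_prod R (b i) (adjoint_mat (b i)))" by blast
  have "a = Tmap R (\<Sum>i<k. b i ** adjoint_mat (b i))"
    unfolding ab Tmap_sum star_prod_def ..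
  moreover have "psd (\<Sum>i<k. b i ** adjoint_mat (b i))"
    by (rule psd_sum_gen) (simp_all add: psd_cc)
  ultimately show "succeq0 R a" unfolding succeq0_def by blast
qed

end
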